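(* Let $d=2\delta$ be even, $H\ge1$, $T_{\max}\ge2$. Let $\mu\in\mathbb{C}^\delta$ with $|\mu_k|=1$ and $\lambda=(\mu_1,\bar\mu_1,\dots,\mu_\delta,\bar\mu_\delta)\in\mathbb{C}^d$, and $e_t=\lambda^{t-1}$. Let the parameters satisfy, for every $T\in\{2,\dots,T_{\max}\}$, $P_{T-1,T-1}=-1$, $P_{T-1,T}=2$, $P_{T-1,t}=0$ for $t\le T-2$, and $\mathtt{B}^\top\mathtt{A}=\frac12\mathrm{diag}(J,\dots,J)$ (block diagonal with $\delta$ blocks), where $J\in\mathbb{R}^{2\times2}$ has all entries equal to $1$. Then $\mathcal{T}_\theta(e_{1:T})=\lambda^T$ for every $T\in\{2,\dots,T_{\max}\}$; in particular the loss in the orthogonal setting vanishes, and $H=\delta$ heads suffice to achieve this.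
   Context: Model: parameters $\mathtt{A},\mathtt{B}\in\mathbb{R}^{H\times d}$ with rows $a_h,b_h\in\mathbb{R}^d$ and $P\in\mathbb{R}^{T_{\max}\times T_{\max}}$; $\mathcal{T}_\theta(e_{1:T})=\sum_{h=1}^H\sum_{t=1}^T P_{T-1,t}\langle e_t,\mathrm{diag}(a_h)e_{T-1}\rangle_{\mathbb{C}}\mathrm{diag}(b_h)e_t$ with $\langle x,y\rangle_{\mathbb{C}}=\sum_i x_i\bar y_i$. Orthogonal setting loss: $\ell(\theta)=\sum_{T=2}^{T_{\max}}\mathbb{E}\|\mathcal{T}_\theta(e_{1:T})-\lambda^T\|^2$ where $\mu$ has i.i.d. coordinates uniform on the unit circle. Powers are coordinatewise. *)

theory Defs
  imports "HOL-Probability.Probability"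
begin

(* Conventions: vector coordinates are 0-based (i < d = 2*delta); token positions
   and rows/columns of P are 1-based as in the paper; heads h < H. *)

definition lam :: "(nat \<Rightarrow> complex) \<Rightarrow> nat \<Rightarrow> complex" where
  "lam \<mu> i = (if even i then \<mu> (i div 2) else cnj (\<mu> (i div 2)))"

definition emb :: "(nat \<Rightarrow> complex) \<Rightarrow> nat \<Rightarrow> nat \<Rightarrow> complex" where
  "emb \<mu> t = (\<lambda>i. lam \<mu> i ^ (t - 1))"

definition cinner :: "nat \<Rightarrow> (nat \<Rightarrow> complex) \<Rightarrow> (nat \<Rightarrow> complex) \<Rightarrow> complex" where
  "cinner d x y = (\<Sum>j<d. x j * cnj (y j))"

(* T_theta(e_{1:T}), coordinate i; A h j = (a_h)_j, B h i = (b_h)_i *)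
definition Tth :: "nat \<Rightarrow> nat \<Rightarrow> (nat \<Rightarrow> nat \<Rightarrow> real) \<Rightarrow> (nat \<Rightarrow> nat \<Rightarrow> real)
     \<Rightarrow> (nat \<Rightarrow> nat \<Rightarrow> real) \<Rightarrow> nat \<Rightarrow> (nat \<Rightarrow> nat \<Rightarrow> complex) \<Rightarrow> nat \<Rightarrow> complex" where
  "Tth d H A B P T e i =
     (\<Sum>h<H. \<Sum>t=1..T. of_real (P (T - 1) t)
        * cinner d (e t) (\<lambda>j. of_real (A h j) * e (T - 1) j)
        * of_real (B h i) * e t i)"

definition unif_circle :: "complex measure" where
  "unif_circle = distr (uniform_measure lborel {0..2*pi}) borel (\<lambda>t. cis t)"

definition mu_law :: "nat \<Rightarrow> (nat \<Rightarrow> complex) measure" where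
  "mu_law \<delta> = PiM {..<\<delta>} (\<lambda>_. unif_circle)"

definition loss :: "nat \<Rightarrow> nat \<Rightarrow> (nat \<Rightarrow> nat \<Rightarrow> real) \<Rightarrow> (nat \<Rightarrow> nat \<Rightarrow> real)
     \<Rightarrow> (nat \<Rightarrow> nat \<Rightarrow> real) \<Rightarrow> nat \<Rightarrow> real" where
  "loss \<delta> H A B P Tmax =
     (\<Sum>T=2..Tmax. \<integral>\<mu>. (\<Sum>i<2*\<delta>. (cmod (Tth (2*\<delta>) H A B P T (emb \<mu>) i - lam \<mu> i ^ T))\<^sup>2) \<partial>mu_law \<delta>)"

(* (B^T A)_{ij} = 1/2 diag(J,...,J)_{ij} *)
definition BA_cond :: "nat \<Rightarrow> nat \<Rightarrow> (nat \<Rightarrow> nat \<Rightarrow> real) \<Rightarrow> (nat \<Rightarrow> nat \<Rightarrow> real) \<Rightarrow> bool" where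
  "BA_cond \<delta> H A B \<longleftrightarrow> (\<forall>i<2*\<delta>. \<forall>j<2*\<delta>.
      (\<Sum>h<H. B h i * A h j) = (if i div 2 = j div 2 then 1/2 else 0))"

definition P_cond :: "nat \<Rightarrow> (nat \<Rightarrow> nat \<Rightarrow> real) \<Rightarrow> bool" where
  "P_cond Tmax P \<longleftrightarrow> (\<forall>T\<in>{2..Tmax}. P (T - 1) (T - 1) = -1 \<and> P (T - 1) T = 2
      \<and> (\<forall>t\<in>{1..T - 2}. P (T - 1) t = 0))"

end

theory Submission
  imports Defs
begin

lemma lam_unit:
  assumes mu: "\<forall>k<\<delta>. cmod (\<mu> k) = 1" and j: "j < 2*\<delta>"
  shows "lam \<mu> j * cnj (lam \<mu> j) = 1"
proof -
  have "j div 2 < \<delta>" using j by auto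
  then have "cmod (lam \<mu> j) = 1" using mu by (simp add: lam_def)
  then show ?thesis using complex_norm_square[of "lam \<mu> j"] by simp
qed

lemma block_sum:
  fixes k \<delta> :: nat and c :: complex and f :: "nat \<Rightarrow> complex"
  assumes k: "k < \<delta>"
  shows "(\<Sum>j<2*\<delta>. (if k = j div 2 then c else 0) * f j) = c * (f (2*k) + f (2*k+1))"
proof -
  have "(\<Sum>j<2*\<delta>. (if k = j div 2 then c else 0) * f j) = (\<Sum>j<2*\<delta>. if j \<in> {2*k, 2*k+1} then c * f j else 0)"
  proof (rule sum.cong[OF refl])
    fix x :: nat
    have "k = x div 2 \<longleftrightarrow> x = 2*k \<or> x = 2*k+1" by presburger
    then show "(if k = x div 2 then c else 0) * f x = (if x \<in> {2*k, 2*k+1} then c * f x else 0)"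
      by auto
  qed
  also have "\<dots> = (\<Sum>j\<in>{2*k, 2*k+1}. c * f j)"
    using k by (subst sum.inter_restrict[symmetric]) (auto intro!: sum.cong)
  also have "\<dots> = c * (f (2*k) + f (2*k+1))" by (simp add: distrib_left)
  finally show ?thesis .
qed

lemma swap_aux:
  fixes f :: "nat \<Rightarrow> nat \<Rightarrow> complex"
  shows "(\<Sum>h\<in>H. (\<Sum>j\<in>J. f h j) * g h) = (\<Sum>j\<in>J. \<Sum>h\<in>H. g h * f h j)"
  unfolding sum_distrib_right by (subst sum.swap) (simp add: mult.commute)

lemma swap2:
  fixes a :: "nat \<Rightarrow> nat \<Rightarrow> complex"
  shows "(\<Sum>h\<in>H. (\<Sum>j\<in>J. a h j * x j) * (b h * c)) = (\<Sum>j\<in>J. (\<Sum>h\<in>H. b h * a h j) * x j) * c"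
proof -
  have "(\<Sum>h\<in>H. (\<Sum>j\<in>J. a h j * x j) * (b h * c)) = (\<Sum>h\<in>H. \<Sum>j\<in>J. b h * a h j * x j * c)"
    by (simp add: sum_distrib_left sum_distrib_right mult_ac)
  also have "\<dots> = (\<Sum>j\<in>J. \<Sum>h\<in>H. b h * a h j * x j * c)" by (rule sum.swap)
  also have "\<dots> = (\<Sum>j\<in>J. (\<Sum>h\<in>H. b h * a h j) * x j) * c"
    by (simp add: sum_distrib_right)
  finally show ?thesis .
qed
lemma core:
  fixes A B P :: "nat \<Rightarrow> nat \<Rightarrow> real"
  assumes mu: "\<forall>k<\<delta>. cmod (\<mu> k) = 1" and BA: "BA_cond \<delta> H A B"
    and P1: "P (T-1) (T-1) = -1" and P2: "P (T-1) T = 2"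
    and P0: "\<forall>t\<in>{1..T-2}. P (T-1) t = 0" and T: "T \<ge> 2" and i: "i < 2*\<delta>"
  shows "Tth (2*\<delta>) H A B P T (emb \<mu>) i = lam \<mu> i ^ T"
proof -
  define l where "l = lam \<mu>"
  define n where "n = T - 2"
  have Tn: "T = Suc (Suc n)" using T n_def by auto
  have cin1: "cinner (2*\<delta>) (emb \<mu> (T-1)) (\<lambda>j. of_real (A h j) * emb \<mu> (T-1) j) = (\<Sum>j<2*\<delta>. of_real (A h j))" for h
    unfolding cinner_def
  proof (rule sum.cong)
    fix j assume "j \<in> {..<2*\<delta>}"
    then have u: "l j * cnj (l j) = 1" using lam_unit[OF mu] l_def by auto
    have "emb \<mu> (T - 1) j * cnj (complex_of_real (A h j) * emb \<mu> (T - 1) j)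
        = of_real (A h j) * (l j * cnj (l j)) ^ n"
      by (simp add: emb_def Tn l_def power_mult_distrib)
    then show "emb \<mu> (T - 1) j * cnj (complex_of_real (A h j) * emb \<mu> (T - 1) j) = of_real (A h j)"
      using u by simp
  qed simp
  have cin2: "cinner (2*\<delta>) (emb \<mu> T) (\<lambda>j. of_real (A h j) * emb \<mu> (T-1) j) = (\<Sum>j<2*\<delta>. of_real (A h j) * l j)" for h
    unfolding cinner_def
  proof (rule sum.cong)
    fix j assume "j \<in> {..<2*\<delta>}"
    then have u: "l j * cnj (l j) = 1" using lam_unit[OF mu] l_def by auto
    have "emb \<mu> T j * cnj (complex_of_real (A h j) * emb \<mu> (T - 1) j)
        = of_real (A h j) * l j * (l j * cnj (l j)) ^ n"
      by (simp add: emb_def Tn l_def power_mult_distrib)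
    then show "emb \<mu> T j * cnj (complex_of_real (A h j) * emb \<mu> (T - 1) j) = of_real (A h j) * l j"
      using u by simp
  qed simp
  have setT: "{1..T} = insert T (insert (T-1) {1..T-2})" using T by auto
  have z: "(\<Sum>t=1..T-2. of_real (P (T - 1) t) * cinner (2*\<delta>) (emb \<mu> t) (\<lambda>j. of_real (A h j) * emb \<mu> (T - 1) j)
        * of_real (B h i) * emb \<mu> t i) = 0" for h
    using P0 by simp
  have "Tth (2*\<delta>) H A B P T (emb \<mu>) i =
     (\<Sum>h<H. of_real (P (T-1) T) * cinner (2*\<delta>) (emb \<mu> T) (\<lambda>j. of_real (A h j) * emb \<mu> (T - 1) j) * of_real (B h i) * emb \<mu> T i
      + of_real (P (T-1) (T-1)) * cinner (2*\<delta>) (emb \<mu> (T-1)) (\<lambda>j. of_real (A h j) * emb \<mu> (T - 1) j) * of_real (B h i) * emb \<mu> (T-1) i)"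
    unfolding Tth_def
  proof (rule sum.cong[OF refl])
    fix h
    have f: "finite {1..T-2}" "T \<notin> insert (T-1) {1..T-2}" "T-1 \<notin> {1..T-2}" using T by auto
    show "(\<Sum>t = 1..T. of_real (P (T - 1) t) * cinner (2 * \<delta>) (emb \<mu> t) (\<lambda>j. of_real (A h j) * emb \<mu> (T - 1) j) *
          of_real (B h i) * emb \<mu> t i) =
         of_real (P (T-1) T) * cinner (2*\<delta>) (emb \<mu> T) (\<lambda>j. of_real (A h j) * emb \<mu> (T - 1) j) * of_real (B h i) * emb \<mu> T i
      + of_real (P (T-1) (T-1)) * cinner (2*\<delta>) (emb \<mu> (T-1)) (\<lambda>j. of_real (A h j) * emb \<mu> (T - 1) j) * of_real (B h i) * emb \<mu> (T-1) i"
      unfolding setT sum.insert[OF finite_insert[THEN iffD2, OF f(1)] f(2)] sum.insert[OF f(1) f(3)] z by simp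
  qed
  also have "\<dots> = (\<Sum>h<H. (\<Sum>j<2*\<delta>. of_real (A h j) * l j) * (2 * of_real (B h i) * l i ^ Suc n)
      + (\<Sum>j<2*\<delta>. of_real (A h j)) * (- of_real (B h i) * l i ^ n))"
    unfolding cin1 cin2 P1 P2 by (rule sum.cong) (simp_all add: emb_def Tn l_def algebra_simps)
  also have "\<dots> = (\<Sum>h<H. (\<Sum>j<2*\<delta>. of_real (A h j) * l j) * (2 * of_real (B h i) * l i ^ Suc n))
      + (\<Sum>h<H. (\<Sum>j<2*\<delta>. of_real (A h j)) * (- of_real (B h i) * l i ^ n))"
    by (rule sum.distrib)
  also have "\<dots> = (\<Sum>j<2*\<delta>. of_real (\<Sum>h<H. B h i * A h j) * l j) * (2 * l i ^ Suc n)
      - (\<Sum>j<2*\<delta>. of_real (\<Sum>h<H. B h i * A h j)) * l i ^ n"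
  proof -
    have ofr: "(\<Sum>h<H. of_real (B h i) * of_real (A h j)) = (of_real (\<Sum>h<H. B h i * A h j) :: complex)" for j
      by simp
    have e1: "(\<Sum>h<H. (\<Sum>j<2*\<delta>. of_real (A h j) * l j) * (2 * of_real (B h i) * l i ^ Suc n))
        = (\<Sum>h<H. (\<Sum>j<2*\<delta>. of_real (A h j) * l j) * (of_real (B h i) * (2 * l i ^ Suc n)))"
      by (rule sum.cong) (simp_all add: mult_ac)
    have e2: "(\<Sum>h<H. (\<Sum>j<2*\<delta>. of_real (A h j)) * (- of_real (B h i) * l i ^ n))
        = (\<Sum>h<H. (\<Sum>j<2*\<delta>. of_real (A h j) * (\<lambda>_. 1) j) * (of_real (B h i) * (- (l i ^ n))))"
      by (rule sum.cong) (simp_all add: mult_ac)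
    show ?thesis unfolding e1 e2 swap2 ofr by (simp add: sum_distrib_left sum_distrib_right sum_negf mult_ac)
  qed
  also have "\<dots> = (\<Sum>j<2*\<delta>. (if i div 2 = j div 2 then 1/2 else 0) * l j) * (2 * l i ^ Suc n)
      - (\<Sum>j<2*\<delta>. (if i div 2 = j div 2 then 1/2 else 0) * (\<lambda>_. 1) j) * l i ^ n"
  proof -
    have Mv: "(of_real (\<Sum>h<H. B h i * A h j) :: complex) = (if i div 2 = j div 2 then 1/2 else 0)"
      if "j < 2*\<delta>" for j
      using BA i that unfolding BA_cond_def by auto
    have Mv': "(\<Sum>h<H. complex_of_real (B h i) * complex_of_real (A h j)) = (if i div 2 = j div 2 then 1/2 else 0)"
      if "j < 2*\<delta>" for j
      using Mv[OF that] by simp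
    have s1: "(\<Sum>j<2*\<delta>. of_real (\<Sum>h<H. B h i * A h j) * l j) = (\<Sum>j<2*\<delta>. (if i div 2 = j div 2 then 1/2 else 0) * l j)"
      by (rule sum.cong[OF refl], subst Mv, simp_all)
    have s2: "(\<Sum>j<2*\<delta>. of_real (\<Sum>h<H. B h i * A h j)) = (\<Sum>j<2*\<delta>. (if i div 2 = j div 2 then 1/2 else 0) * (\<lambda>_. 1::complex) j)"
      by (rule sum.cong[OF refl], subst Mv, simp_all)
    show ?thesis by (simp only: s1 s2)
  qed
  also have "\<dots> = (l (2*(i div 2)) + l (2*(i div 2) + 1)) * l i ^ Suc n - l i ^ n"
    using i by (subst block_sum, simp, subst block_sum, simp, simp)
  also have "\<dots> = l i ^ T"
  proof -
    have k: "i div 2 < \<delta>" using i by auto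
    have m: "\<mu> (i div 2) * cnj (\<mu> (i div 2)) = 1"
      using mu k complex_norm_square[of "\<mu> (i div 2)"] by simp
    have s: "l (2*(i div 2)) + l (2*(i div 2) + 1) = \<mu> (i div 2) + cnj (\<mu> (i div 2))"
      by (simp add: l_def lam_def)
    have q: "(\<mu> (i div 2) + cnj (\<mu> (i div 2))) * l i = l i * l i + 1"
      using m by (cases "even i") (auto simp: l_def lam_def algebra_simps)
    have r: "(\<mu> (i div 2) + cnj (\<mu> (i div 2))) * l i ^ Suc n = (l i * l i + 1) * l i ^ n"
      unfolding power_Suc mult.assoc[symmetric] q ..
    show ?thesis unfolding s Tn r by (simp add: algebra_simps)
  qed
  finally show ?thesis by (simp add: l_def)
qed

lemma core2:
  fixes A B P :: "nat \<Rightarrow> nat \<Rightarrow> real"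
  assumes mu: "\<forall>k<\<delta>. cmod (\<mu> k) = 1" and BA: "BA_cond \<delta> H A B"
    and PC: "P_cond Tmax P" and T: "T \<in> {2..Tmax}" and i: "i < 2*\<delta>"
  shows "Tth (2*\<delta>) H A B P T (emb \<mu>) i = lam \<mu> i ^ T"
proof -
  have h: "P (T - 1) (T - 1) = -1 \<and> P (T - 1) T = 2 \<and> (\<forall>t\<in>{1..T - 2}. P (T - 1) t = 0)"
    using PC T unfolding P_cond_def by blast
  have T2: "T \<ge> 2" using T by simp
  show ?thesis using h by (intro core[OF mu BA _ _ _ T2 i]) blast+
qed

lemma AE_unit:
  "AE \<mu> in mu_law \<delta>. \<forall>k<\<delta>. cmod (\<mu> k) = 1"
proof -
  have mc: "cis \<in> borel_measurable (uniform_measure lborel {0..2*pi})"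
    by (subst measurable_cong_sets[OF sets_uniform_measure refl], subst measurable_cong_sets[OF sets_lborel refl])
      (rule borel_measurable_continuous_onI, intro continuous_intros)
  have ps: "prob_space unif_circle"
    unfolding unif_circle_def
    by (rule prob_space.prob_space_distr, rule prob_space_uniform_measure) (auto simp: mc)
  have ae1: "AE z in unif_circle. cmod z = 1"
    unfolding unif_circle_def
    by (subst AE_distr_iff[OF mc]) auto
  have "\<forall>k\<in>{..<\<delta>}. AE \<mu> in mu_law \<delta>. cmod (\<mu> k) = 1"
    unfolding mu_law_def using ps ae1
    by (auto intro!: AE_PiM_component)
  then have "AE \<mu> in mu_law \<delta>. \<forall>k\<in>{..<\<delta>}. cmod (\<mu> k) = 1"
    by (rule eventually_ball_finite[rotated]) simp
  then show ?thesis by (rule eventually_mono) auto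
qed

lemma loss0:
  assumes PC: "P_cond Tmax P" and BA: "BA_cond \<delta> H A B"
  shows "loss \<delta> H A B P Tmax = 0"
  unfolding loss_def
proof (rule sum.neutral, rule ballI)
  fix T assume T: "T \<in> {2..Tmax}"
  show "(\<integral>\<mu>. (\<Sum>i<2*\<delta>. (cmod (Tth (2*\<delta>) H A B P T (emb \<mu>) i - lam \<mu> i ^ T))\<^sup>2) \<partial>mu_law \<delta>) = 0"
  proof (rule integral_eq_zero_AE)
    show "AE \<mu> in mu_law \<delta>. (\<Sum>i<2*\<delta>. (cmod (Tth (2*\<delta>) H A B P T (emb \<mu>) i - lam \<mu> i ^ T))\<^sup>2) = 0"
      using AE_unit
    proof eventually_elim
      case (elim \<mu>)
      have "Tth (2*\<delta>) H A B P T (emb \<mu>) i = lam \<mu> i ^ T" if "i < 2*\<delta>" for i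
        using core2[OF elim BA PC T that] .
      then show ?case by simp
    qed
  qed
qed

theorem lemma4:
  fixes \<delta> H Tmax :: nat and A B P :: "nat \<Rightarrow> nat \<Rightarrow> real" and \<mu> :: "nat \<Rightarrow> complex"
  assumes "H \<ge> 1" and "Tmax \<ge> 2"
    and "\<forall>k<\<delta>. cmod (\<mu> k) = 1"
    and "P_cond Tmax P"
    and "BA_cond \<delta> H A B"
  shows "(\<forall>T\<in>{2..Tmax}. \<forall>i<2*\<delta>. Tth (2*\<delta>) H A B P T (emb \<mu>) i = lam \<mu> i ^ T)
         \<and> loss \<delta> H A B P Tmax = 0
         \<and> (\<exists>A' B' :: nat \<Rightarrow> nat \<Rightarrow> real. BA_cond \<delta> \<delta> A' B' \<and> loss \<delta> \<delta> A' B' P Tmax = 0)"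
proof (intro conjI)
  show "\<forall>T\<in>{2..Tmax}. \<forall>i<2*\<delta>. Tth (2*\<delta>) H A B P T (emb \<mu>) i = lam \<mu> i ^ T"
    using core2[OF assms(3) assms(5) assms(4)] by blast
  show "loss \<delta> H A B P Tmax = 0" by (rule loss0[OF assms(4,5)])
  define A' :: "nat \<Rightarrow> nat \<Rightarrow> real" where "A' h j = (if j div 2 = h then 1 else 0)" for h j
  define B' :: "nat \<Rightarrow> nat \<Rightarrow> real" where "B' h i = (if i div 2 = h then 1/2 else 0)" for h i
  have "BA_cond \<delta> \<delta> A' B'"
    unfolding BA_cond_def
  proof (intro allI impI)
    fix i j :: nat assume i: "i < 2*\<delta>" and j: "j < 2*\<delta>"
    have "(\<Sum>h<\<delta>. B' h i * A' h j) = (\<Sum>h<\<delta>. if h = i div 2 then (if i div 2 = j div 2 then 1/2 else 0) else 0)"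
      by (rule sum.cong[OF refl]) (simp add: A'_def B'_def)
    also have "\<dots> = (if i div 2 = j div 2 then 1/2 else 0)"
      using i by (subst sum.delta) auto
    finally show "(\<Sum>h<\<delta>. B' h i * A' h j) = (if i div 2 = j div 2 then 1/2 else 0)" .
  qed
  then show "\<exists>A' B' :: nat \<Rightarrow> nat \<Rightarrow> real. BA_cond \<delta> \<delta> A' B' \<and> loss \<delta> \<delta> A' B' P Tmax = 0"
    using loss0[OF assms(4)] by blast
qed

end
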